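(* Let $t_0>0$, $D\ge0$, $\alpha_1,\alpha_2\in\mathbb{R}$ and $i\in\mathbb{Z}^+$ with $\alpha_1\le\alpha_2-1$ and $\alpha_2-\alpha_1\le i$. Let $F:\{-1,\dots,i\}\times[\alpha_1-1,\alpha_2]\times[t_0,\infty)\to[0,\infty)$ be such that $F(j,\alpha,t)$ is Lebesgue measurable in $t$ for each $\alpha,j$. Let $\gamma\ge0$. Assume: (1) (monotonicity) for all $j,j_1,j_2\in\{-1,\dots,i\}$ with $j_1\le j_2$, all $\beta,\beta_1,\beta_2\in[\alpha_1,\alpha_2]$ with $\beta_1\le\beta_2$, and all $t\ge t_0$: $F(j_1,\beta,t)\lesssim F(j_2,\beta,t)$ and $F(j,\beta_1,t)\lesssim F(j,\beta_2,t)$; (2) (interpolation) for all $j\in\{-1,\dots,i\}$, all $\alpha,\beta_1,\beta_2\in[\alpha_1,\alpha_2]$ with $\beta_1\le\alpha\le\beta_2$, and all $t\ge t_0$: $F(j,\alpha,t)\lesssim F(j,\beta_1,t)^{\frac{\beta_2-\alpha}{\beta_2-\beta_1}}F(j,\beta_2,t)^{\frac{\alpha-\beta_1}{\beta_2-\beta_1}}$; (3) (energy and Morawetz estimate) for all $j\in\{0,\dots,i\}$, $\alpha\in[\alpha_1,\alpha_2]$ and $t_2\ge t_1\ge t_0$: $F(j,\alpha,t_2)+\int_{t_1}^{t_2}F(j-1,\alpha-1,t)\,dt\lesssim F(j,\alpha,t_1)+Dt_1^{\alpha-\alpha_2-\gamma}$; (4) (initial decay rate) if $\gamma>0$, then for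 all $t\ge t_0$: $F(i,\alpha_2,t)\lesssim t^{-\gamma}(F(i,\alpha_2,t_0)+D)$. Then for all $j\in\{0,\dots,i\}$, all $\alpha\in[\max\{\alpha_1,\alpha_2-j\},\alpha_2]$ and all $t\ge t_0$, $$F(i-j,\alpha,t)\lesssim t^{\alpha-\alpha_2-\gamma}(F(i,\alpha_2,t_0)+D),$$ where the implicit constant may depend on $\alpha_1$ and $\alpha_2$.
   Context: $A\lesssim B$ means $A\le CB$ for a constant $C$ independent of $t,t_1,t_2$ and $D$. In the paper $t_0=10M>0$. *)

theory Defs
  imports "HOL-Analysis.Analysis"
begin

end

theory Submission
  imports Defs
begin
lemma exists_small:
  fixes f :: "real \<Rightarrow> real"
  assumes ab: "a < b" and M: "M > 0"
    and I: "(\<integral>\<^sup>+ s\<in>{a..b}. ennreal (f s) \<partial>lebesgue) \<le> ennreal M"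
  shows "\<exists>s\<in>{a..b}. f s \<le> 2*M/(b-a)"
proof (rule ccontr)
  assume "\<not> ?thesis"
  hence lt: "\<And>s. s \<in> {a..b} \<Longrightarrow> 2*M/(b-a) < f s" by (auto simp: not_le)
  have "(\<integral>\<^sup>+ s. ennreal (2*M/(b-a)) * indicator {a..b} s \<partial>lebesgue)
        \<le> (\<integral>\<^sup>+ s\<in>{a..b}. ennreal (f s) \<partial>lebesgue)"
  proof (rule nn_integral_mono)
    fix s
    have "s \<in> {a..b} \<Longrightarrow> ennreal (2*M/(b-a)) \<le> ennreal (f s)"
      using lt[of s] by (intro ennreal_leI) simp
    thus "ennreal (2*M/(b-a)) * indicator {a..b} s \<le> ennreal (f s) * indicator {a..b} s"
      by (auto simp: indicator_def)
  qed
  moreover have "(\<integral>\<^sup>+ s. ennreal (2*M/(b-a)) * indicator {a..b} s \<partial>lebesgue) = ennreal (2*M)"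
    using ab M by (simp add: nn_integral_cmult_indicator ennreal_mult''[symmetric])
  ultimately have "ennreal (2*M) \<le> ennreal M" using I by simp
  thus False using M by simp
qed

lemma pw1: "0 < (a::real) \<Longrightarrow> 0 < b \<Longrightarrow> (a/b) powr (e-1) = b powr (1-e) * a powr (e-1)"
proof -
  assume "0 < a" "0 < b"
  hence "(a/b) powr (e-1) = a powr (e-1) / b powr (e-1)" by (simp add: powr_divide)
  also have "\<dots> = b powr (1-e) * a powr (e-1)" using powr_minus[of b "e-1"] by (simp add: divide_inverse)
  finally show ?thesis by simp
qed

lemma powr_ge1: "0 < x \<Longrightarrow> x \<le> 1 \<Longrightarrow> p \<le> 0 \<Longrightarrow> 1 \<le> (x::real) powr p"
  by (metis powr_mono2' powr_one_eq_one)

definition stepc :: "real \<Rightarrow> real \<Rightarrow> real \<Rightarrow> real \<Rightarrow> real" where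
  "stepc C t0 e A = C*(2*C*(A+1)+1) * 2 powr (1-e) + C*(C*C + t0 powr (e-1)) * (2*t0) powr (1-e)"

fun Aseq :: "real \<Rightarrow> real \<Rightarrow> real \<Rightarrow> nat \<Rightarrow> real" where
  "Aseq C t0 \<gamma> 0 = C"
| "Aseq C t0 \<gamma> (Suc n) = max (Aseq C t0 \<gamma> n) (stepc C t0 (- real n - \<gamma>) (Aseq C t0 \<gamma> n))"

definition Astar :: "real \<Rightarrow> real \<Rightarrow> real \<Rightarrow> real \<Rightarrow> real \<Rightarrow> real" where
  "Astar C t0 \<alpha>1 \<alpha>2 \<gamma> = max (Aseq C t0 \<gamma> (nat \<lfloor>\<alpha>2 - \<alpha>1\<rfloor>))
     (stepc C t0 (\<alpha>1 + 1 - \<alpha>2 - \<gamma>) (C * ((C+1) * Aseq C t0 \<gamma> (nat \<lfloor>\<alpha>2 - \<alpha>1\<rfloor>))))"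

lemma Aseq_ge: "C > 0 \<Longrightarrow> C \<le> Aseq C t0 \<gamma> n"
  by (induction n) auto

lemma Aseq_mono: "k \<le> n \<Longrightarrow> Aseq C t0 \<gamma> k \<le> Aseq C t0 \<gamma> n"
  by (induction n) (auto simp: le_Suc_eq intro: order.trans)

locale L =
  fixes t0 \<alpha>1 \<alpha>2 \<gamma> C :: real and i :: int and D :: real and F :: "int \<Rightarrow> real \<Rightarrow> real \<Rightarrow> real"
  assumes t0: "t0 > 0" and a12: "\<alpha>1 \<le> \<alpha>2 - 1" and i1: "i \<ge> 1" and ai: "\<alpha>2 - \<alpha>1 \<le> of_int i"
      and g0: "\<gamma> \<ge> 0" and C0: "C > 0" and D0: "D > 0"
  and nonneg: "\<forall>j \<in> {-1..i}. \<forall>\<alpha> \<in> {\<alpha>1 - 1..\<alpha>2}. \<forall>t \<ge> t0. F j \<alpha> t \<ge> 0"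
  and mono_j: "\<forall>j1 \<in> {-1..i}. \<forall>j2 \<in> {-1..i}. \<forall>\<beta> \<in> {\<alpha>1..\<alpha>2}. \<forall>t \<ge> t0.
          j1 \<le> j2 \<longrightarrow> F j1 \<beta> t \<le> C * F j2 \<beta> t"
  and mono_b: "\<forall>j \<in> {-1..i}. \<forall>\<beta>1 \<in> {\<alpha>1..\<alpha>2}. \<forall>\<beta>2 \<in> {\<alpha>1..\<alpha>2}. \<forall>t \<ge> t0.
          \<beta>1 \<le> \<beta>2 \<longrightarrow> F j \<beta>1 t \<le> C * F j \<beta>2 t"
  and interp: "\<forall>j \<in> {-1..i}. \<forall>\<alpha> \<in> {\<alpha>1..\<alpha>2}. \<forall>\<beta>1 \<in> {\<alpha>1..\<alpha>2}. \<forall>\<beta>2 \<in> {\<alpha>1..\<alpha>2}. \<forall>t \<ge> t0.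
          \<beta>1 \<le> \<alpha> \<and> \<alpha> \<le> \<beta>2 \<and> \<beta>1 < \<beta>2 \<longrightarrow>
          F j \<alpha> t \<le> C * (F j \<beta>1 t powr ((\<beta>2 - \<alpha>) / (\<beta>2 - \<beta>1)))
                        * (F j \<beta>2 t powr ((\<alpha> - \<beta>1) / (\<beta>2 - \<beta>1)))"
  and energy: "\<forall>j \<in> {0..i}. \<forall>\<alpha> \<in> {\<alpha>1..\<alpha>2}. \<forall>t1 t2. t0 \<le> t1 \<and> t1 \<le> t2 \<longrightarrow>
          ennreal (F j \<alpha> t2) + (\<integral>\<^sup>+ t\<in>{t1..t2}. ennreal (F (j - 1) (\<alpha> - 1) t) \<partial>lebesgue)
            \<le> ennreal (C * (F j \<alpha> t1 + D * t1 powr (\<alpha> - \<alpha>2 - \<gamma>)))"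
  and decay: "\<gamma> > 0 \<longrightarrow> (\<forall>t \<ge> t0. F i \<alpha>2 t \<le> C * t powr (- \<gamma>) * (F i \<alpha>2 t0 + D))"
begin

definition good :: "int \<Rightarrow> real \<Rightarrow> real \<Rightarrow> bool" where
  "good m \<beta> A \<longleftrightarrow> (\<forall>t\<ge>t0. F m \<beta> t \<le> A * t powr (\<beta> - \<alpha>2 - \<gamma>) * (F i \<alpha>2 t0 + D))"

lemma Fnn: "-1 \<le> j \<Longrightarrow> j \<le> i \<Longrightarrow> \<alpha>1 - 1 \<le> a \<Longrightarrow> a \<le> \<alpha>2 \<Longrightarrow> t0 \<le> t \<Longrightarrow> 0 \<le> F j a t"
  using nonneg by auto

lemma Xpos: "F i \<alpha>2 t0 + D > 0"
  using Fnn[of i \<alpha>2 t0] i1 a12 D0 by auto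

lemma energy_pt:
  assumes "0 \<le> j" "j \<le> i" "\<alpha>1 \<le> a" "a \<le> \<alpha>2" "t0 \<le> t1" "t1 \<le> t2"
  shows "F j a t2 \<le> C * (F j a t1 + D * t1 powr (a - \<alpha>2 - \<gamma>))"
proof -
  have e: "ennreal (F j a t2) + (\<integral>\<^sup>+ t\<in>{t1..t2}. ennreal (F (j - 1) (a - 1) t) \<partial>lebesgue)
            \<le> ennreal (C * (F j a t1 + D * t1 powr (a - \<alpha>2 - \<gamma>)))"
    using energy assms by auto
  have "ennreal (F j a t2) \<le> ennreal (C * (F j a t1 + D * t1 powr (a - \<alpha>2 - \<gamma>)))"
    by (rule order.trans[OF _ e]) simp
  moreover have "0 \<le> C * (F j a t1 + D * t1 powr (a - \<alpha>2 - \<gamma>))"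
    using C0 D0 Fnn[of j a t1] assms by auto
  ultimately show ?thesis by simp
qed

lemma energy_int:
  assumes "0 \<le> j" "j \<le> i" "\<alpha>1 \<le> a" "a \<le> \<alpha>2" "t0 \<le> t1" "t1 \<le> t2"
  shows "(\<integral>\<^sup>+ t\<in>{t1..t2}. ennreal (F (j - 1) (a - 1) t) \<partial>lebesgue)
            \<le> ennreal (C * (F j a t1 + D * t1 powr (a - \<alpha>2 - \<gamma>)))"
proof -
  have e: "ennreal (F j a t2) + (\<integral>\<^sup>+ t\<in>{t1..t2}. ennreal (F (j - 1) (a - 1) t) \<partial>lebesgue)
            \<le> ennreal (C * (F j a t1 + D * t1 powr (a - \<alpha>2 - \<gamma>)))"
    using energy assms by auto
  show ?thesis by (rule order.trans[OF _ e]) simp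
qed

lemma good_mono: "good m \<beta> A \<Longrightarrow> A \<le> A' \<Longrightarrow> good m \<beta> A'"
  unfolding good_def
proof (intro allI impI)
  fix t assume g: "\<forall>t\<ge>t0. F m \<beta> t \<le> A * t powr (\<beta> - \<alpha>2 - \<gamma>) * (F i \<alpha>2 t0 + D)"
    and A: "A \<le> A'" and t: "t0 \<le> t"
  have "A * t powr (\<beta> - \<alpha>2 - \<gamma>) * (F i \<alpha>2 t0 + D) \<le> A' * t powr (\<beta> - \<alpha>2 - \<gamma>) * (F i \<alpha>2 t0 + D)"
    using A Xpos by (intro mult_right_mono) auto
  thus "F m \<beta> t \<le> A' * t powr (\<beta> - \<alpha>2 - \<gamma>) * (F i \<alpha>2 t0 + D)" using g t by force
qed

lemma good_idx:
  assumes "good m \<beta> A" "-1 \<le> m'" "m' \<le> m" "m \<le> i" "\<alpha>1 \<le> \<beta>" "\<beta> \<le> \<alpha>2"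
  shows "good m' \<beta> (C*A)"
  unfolding good_def
proof (intro allI impI)
  fix t assume t: "t0 \<le> t"
  have "F m' \<beta> t \<le> C * F m \<beta> t" using mono_j assms t by auto
  also have "\<dots> \<le> C * (A * t powr (\<beta> - \<alpha>2 - \<gamma>) * (F i \<alpha>2 t0 + D))"
    using assms(1) t C0 unfolding good_def by (intro mult_left_mono) auto
  finally show "F m' \<beta> t \<le> C * A * t powr (\<beta> - \<alpha>2 - \<gamma>) * (F i \<alpha>2 t0 + D)" by (simp add: mult.assoc)
qed


lemma good_interp:
  assumes m: "-1 \<le> m" "m \<le> i" and b: "\<alpha>1 \<le> \<beta>1" "\<beta>1 < \<beta>2" "\<beta>2 \<le> \<alpha>2" "\<beta>1 \<le> a" "a \<le> \<beta>2"
    and A: "0 \<le> A" and g1: "good m \<beta>1 A" and g2: "good m \<beta>2 A"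
  shows "good m a (C*A)"
  unfolding good_def
proof (intro allI impI)
  fix t assume t: "t0 \<le> t"
  define X where "X = F i \<alpha>2 t0 + D"
  have X: "X > 0" using Xpos X_def by simp
  have tp: "t > 0" using t t0 by simp
  define th1 where "th1 = (\<beta>2 - a) / (\<beta>2 - \<beta>1)"
  define th2 where "th2 = (a - \<beta>1) / (\<beta>2 - \<beta>1)"
  define e1 where "e1 = \<beta>1 - \<alpha>2 - \<gamma>"
  define e2 where "e2 = \<beta>2 - \<alpha>2 - \<gamma>"
  have th1: "0 \<le> th1" and th2: "0 \<le> th2" using b by (auto simp: th1_def th2_def)
  have thsum: "th1 + th2 = 1"
  proof -
    have "th1 + th2 = ((\<beta>2 - a) + (a - \<beta>1)) / (\<beta>2 - \<beta>1)"
      by (simp only: th1_def th2_def add_divide_distrib)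
    thus ?thesis using b by simp
  qed
  have eid: "e1 * th1 + e2 * th2 = a - \<alpha>2 - \<gamma>"
  proof -
    have ne: "\<beta>2 - \<beta>1 \<noteq> 0" using b by simp
    have "e1 * th1 + e2 * th2 = (e1 * (\<beta>2 - a) + e2 * (a - \<beta>1)) / (\<beta>2 - \<beta>1)"
      by (simp only: th1_def th2_def add_divide_distrib times_divide_eq_right)
    also have "e1 * (\<beta>2 - a) + e2 * (a - \<beta>1) = (a - \<alpha>2 - \<gamma>) * (\<beta>2 - \<beta>1)"
      by (simp add: e1_def e2_def algebra_simps)
    finally show ?thesis using ne by simp
  qed
  have F1: "0 \<le> F m \<beta>1 t" and F2: "0 \<le> F m \<beta>2 t" using Fnn m b t a12 by auto
  have B1: "F m \<beta>1 t \<le> A * t powr e1 * X" using g1 t unfolding good_def e1_def X_def by auto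
  have B2: "F m \<beta>2 t \<le> A * t powr e2 * X" using g2 t unfolding good_def e2_def X_def by auto
  have "F m a t \<le> C * (F m \<beta>1 t powr th1) * (F m \<beta>2 t powr th2)"
    using interp m b t a12 unfolding th1_def th2_def by auto
  also have "\<dots> \<le> C * ((A * t powr e1 * X) powr th1) * ((A * t powr e2 * X) powr th2)"
    using C0 F1 F2 B1 B2 th1 th2
    by (intro mult_mono mult_left_mono powr_mono2) auto
  also have "\<dots> = C * A * t powr (a - \<alpha>2 - \<gamma>) * X"
  proof (cases "A = 0")
    case True
    then show ?thesis by simp
  next
    case False
    hence Ap: "A > 0" using A by simp
    have "(A * t powr e1 * X) powr th1 = (A*X) powr th1 * t powr (e1*th1)"
      using Ap X tp by (simp add: powr_mult powr_powr mult_ac)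
    moreover have "(A * t powr e2 * X) powr th2 = (A*X) powr th2 * t powr (e2*th2)"
      using Ap X tp by (simp add: powr_mult powr_powr mult_ac)
    moreover have "(A*X) powr th1 * (A*X) powr th2 = A * X"
      using Ap X thsum by (simp add: powr_add[symmetric])
    moreover have "t powr (e1*th1) * t powr (e2*th2) = t powr (a - \<alpha>2 - \<gamma>)"
      using eid by (simp add: powr_add[symmetric])
    ultimately show ?thesis
      by (smt (verit) mult.assoc mult.commute)
  qed
  finally show "F m a t \<le> C * A * t powr (a - \<alpha>2 - \<gamma>) * (F i \<alpha>2 t0 + D)" by (simp add: X_def)
qed


lemma good_base: "good i \<alpha>2 C"
  unfolding good_def
proof (intro allI impI)
  fix t assume t: "t0 \<le> t"
  show "F i \<alpha>2 t \<le> C * t powr (\<alpha>2 - \<alpha>2 - \<gamma>) * (F i \<alpha>2 t0 + D)"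
  proof (cases "\<gamma> > 0")
    case True
    then show ?thesis using decay t by simp
  next
    case False
    hence g: "\<gamma> = 0" using g0 by simp
    have "F i \<alpha>2 t \<le> C * (F i \<alpha>2 t0 + D * t0 powr (\<alpha>2 - \<alpha>2 - \<gamma>))"
      using energy_pt[of i \<alpha>2 t0 t] i1 a12 t by simp
    then show ?thesis using g t t0 by simp
  qed
qed

lemma good_step:
  assumes m: "1 \<le> m" "m \<le> i" and b: "\<alpha>1 \<le> \<beta> - 1" "\<beta> \<le> \<alpha>2" and A: "0 \<le> A"
    and g: "good m \<beta> A"
  shows "good (m-1) (\<beta>-1) (stepc C t0 (\<beta> - \<alpha>2 - \<gamma>) A)"
  unfolding good_def
proof (intro allI impI)
  fix \<tau> assume \<tau>: "t0 \<le> \<tau>"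
  define e where "e = \<beta> - \<alpha>2 - \<gamma>"
  define X where "X = F i \<alpha>2 t0 + D"
  have X: "X > 0" using Xpos X_def by simp
  have DX: "D \<le> X" using X_def Fnn[of i \<alpha>2 t0] i1 a12 by simp
  have e: "e \<le> 0" using b g0 by (simp add: e_def)
  have ex: "\<beta> - 1 - \<alpha>2 - \<gamma> = e - 1" by (simp add: e_def)
  have \<tau>p: "\<tau> > 0" using \<tau> t0 by simp
  define T1 where "T1 = C*(2*C*(A+1)+1) * 2 powr (1-e)"
  define T2 where "T2 = C*(C*C + t0 powr (e-1)) * (2*t0) powr (1-e)"
  have T1: "0 \<le> T1" using C0 A by (simp add: T1_def)
  have T2: "0 \<le> T2" using C0 t0 by (simp add: T2_def)
  have st: "stepc C t0 (\<beta> - \<alpha>2 - \<gamma>) A = T1 + T2" by (simp add: stepc_def T1_def T2_def e_def)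
  have Fn: "\<And>s. t0 \<le> s \<Longrightarrow> 0 \<le> F (m-1) (\<beta>-1) s" using Fnn m b a12 by auto
  have main: "F (m-1) (\<beta>-1) \<tau> \<le> T1 * \<tau> powr (e-1) * X \<or> F (m-1) (\<beta>-1) \<tau> \<le> T2 * \<tau> powr (e-1) * X"
  proof (cases "\<tau> \<le> 2*t0")
    case True
    have "F (m-1) (\<beta>-1) \<tau> \<le> C * (F (m-1) (\<beta>-1) t0 + D * t0 powr (e-1))"
      using energy_pt[of "m-1" "\<beta>-1" t0 \<tau>] m b \<tau> ex by simp
    also have "F (m-1) (\<beta>-1) t0 \<le> C * C * F i \<alpha>2 t0"
    proof -
      have "F (m-1) (\<beta>-1) t0 \<le> C * F i (\<beta>-1) t0" using mono_j m b a12 by auto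
      also have "F i (\<beta>-1) t0 \<le> C * F i \<alpha>2 t0" using mono_b m b a12 by auto
      finally show ?thesis using C0 by (simp add: mult.assoc mult_left_mono)
    qed
    hence "C * (F (m-1) (\<beta>-1) t0 + D * t0 powr (e-1)) \<le> C * (C * C * F i \<alpha>2 t0 + D * t0 powr (e-1))"
      using C0 by simp
    also have "\<dots> \<le> C * (C*C + t0 powr (e-1)) * X"
    proof -
      have "C*C*F i \<alpha>2 t0 + D * t0 powr (e-1) \<le> C*C*X + X * t0 powr (e-1)"
      proof (rule add_mono)
        show "C*C*F i \<alpha>2 t0 \<le> C*C*X" using X_def D0 C0 by (intro mult_left_mono) auto
        show "D * t0 powr (e-1) \<le> X * t0 powr (e-1)" using DX by (intro mult_right_mono) auto
      qed
      from mult_left_mono[OF this less_imp_le[OF C0]] show ?thesis by (simp add: algebra_simps)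
    qed
    also have "\<dots> \<le> C * (C*C + t0 powr (e-1)) * X * ((\<tau> / (2*t0)) powr (e-1))"
    proof -
      have "1 \<le> (\<tau> / (2*t0)) powr (e-1)" using True t0 \<tau>p e by (intro powr_ge1) auto
      moreover have "0 \<le> C * (C*C + t0 powr (e-1)) * X" using C0 X by simp
      ultimately show ?thesis by (metis mult.right_neutral mult_left_mono)
    qed
    also have "(\<tau> / (2*t0)) powr (e-1) = (2*t0) powr (1-e) * \<tau> powr (e-1)"
      using t0 \<tau>p by (intro pw1) auto
    finally show ?thesis unfolding T2_def by (simp add: mult_ac)
  next
    case False
    define t where "t = \<tau>/2"
    have tt: "t0 \<le> t" "t < \<tau>" "\<tau> - t = t" "t > 0" using False t0 by (auto simp: t_def)
    define M where "M = C*(A+1) * t powr e * X"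
    have M: "M > 0" using C0 A tt X by (simp add: M_def)
    have "(\<integral>\<^sup>+ s\<in>{t..\<tau>}. ennreal (F (m - 1) (\<beta> - 1) s) \<partial>lebesgue)
            \<le> ennreal (C * (F m \<beta> t + D * t powr e))"
      using energy_int[of m \<beta> t \<tau>] m b tt by (simp add: e_def)
    also have "C * (F m \<beta> t + D * t powr e) \<le> M"
    proof -
      have "F m \<beta> t \<le> A * t powr e * X" using g tt unfolding good_def e_def X_def by auto
      moreover have "D * t powr e \<le> X * t powr e" using DX by (simp add: mult_right_mono)
      ultimately have "F m \<beta> t + D * t powr e \<le> (A+1) * t powr e * X" by (simp add: algebra_simps)
      thus ?thesis using C0 unfolding M_def by (simp add: mult.assoc mult_left_mono)
    qed
    hence "ennreal (C * (F m \<beta> t + D * t powr e)) \<le> ennreal M" by (rule ennreal_leI)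
    finally obtain s where s: "s \<in> {t..\<tau>}" "F (m - 1) (\<beta> - 1) s \<le> 2*M/(\<tau>-t)"
      using exists_small[OF tt(2) M] by blast
    have s2: "F (m - 1) (\<beta> - 1) s \<le> 2*C*(A+1) * t powr (e-1) * X"
    proof -
      have "2*M/(\<tau>-t) = 2*C*(A+1) * (t powr e / t) * X" using tt by (simp add: M_def)
      also have "t powr e / t = t powr (e-1)" using tt by (simp add: powr_diff)
      finally show ?thesis using s by simp
    qed
    have "F (m-1) (\<beta>-1) \<tau> \<le> C * (F (m-1) (\<beta>-1) s + D * s powr (e-1))"
      using energy_pt[of "m-1" "\<beta>-1" s \<tau>] m b s tt ex by simp
    also have "\<dots> \<le> C * (2*C*(A+1) * t powr (e-1) * X + X * t powr (e-1))"
    proof -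
      have "s powr (e-1) \<le> t powr (e-1)" using s tt e by (intro powr_mono2') auto
      hence "D * s powr (e-1) \<le> X * t powr (e-1)" using DX D0 by (intro mult_mono) auto
      thus ?thesis using s2 C0 by (intro mult_left_mono add_mono) auto
    qed
    also have "\<dots> = C*(2*C*(A+1)+1) * t powr (e-1) * X" by (simp add: algebra_simps)
    also have "t powr (e-1) = 2 powr (1-e) * \<tau> powr (e-1)"
      unfolding t_def using \<tau>p by (intro pw1) auto
    finally show ?thesis unfolding T1_def by (simp add: mult_ac)
  qed
  have "T1 * \<tau> powr (e-1) * X \<le> (T1 + T2) * \<tau> powr (e-1) * X"
    using T2 X by (intro mult_right_mono) auto
  moreover have "T2 * \<tau> powr (e-1) * X \<le> (T1 + T2) * \<tau> powr (e-1) * X"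
    using T1 X by (intro mult_right_mono) auto
  ultimately have fin: "F (m-1) (\<beta>-1) \<tau> \<le> (T1 + T2) * \<tau> powr (e-1) * X" using main by linarith
  show "F (m-1) (\<beta>-1) \<tau> \<le> stepc C t0 (\<beta> - \<alpha>2 - \<gamma>) A * \<tau> powr (\<beta> - 1 - \<alpha>2 - \<gamma>) * (F i \<alpha>2 t0 + D)"
    unfolding st ex X_def[symmetric] by (rule fin)
qed

end

lemma cb1: "0 < (C::real) \<Longrightarrow> 0 \<le> A \<Longrightarrow> C*(C*((C+1)*A)) \<le> (C+1)^3*A"
proof -
  assume C: "0 < C" and A: "0 \<le> A"
  have "C*C \<le> (C+1)*(C+1)" using C by (intro mult_mono) auto
  hence "(C*C)*((C+1)*A) \<le> ((C+1)*(C+1))*((C+1)*A)" using C A by (intro mult_right_mono) auto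
  thus ?thesis by (simp add: power3_eq_cube mult_ac)
qed

lemma cb2: "0 < (C::real) \<Longrightarrow> 0 \<le> A \<Longrightarrow> C*A \<le> (C+1)^3*A"
proof -
  assume C: "0 < C" and A: "0 \<le> A"
  have "C \<le> (C+1)^3" using C by (smt (verit) one_le_power power_increasing_iff less_eq_real_def
       self_le_power zero_less_numeral)
  thus ?thesis using A by (intro mult_right_mono) auto
qed

context L begin

definition K where "K = nat \<lfloor>\<alpha>2 - \<alpha>1\<rfloor>"

lemma K_props: "1 \<le> K" "real K \<le> \<alpha>2 - \<alpha>1" "\<alpha>2 - \<alpha>1 < real K + 1" "int K \<le> i"
proof -
  have f1: "1 \<le> \<lfloor>\<alpha>2 - \<alpha>1\<rfloor>" using a12 by (simp add: le_floor_iff)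
  show "1 \<le> K" using nat_mono[OF f1] by (simp add: K_def)
  have "real K = of_int \<lfloor>\<alpha>2 - \<alpha>1\<rfloor>" using f1 by (simp add: K_def)
  thus "real K \<le> \<alpha>2 - \<alpha>1" "\<alpha>2 - \<alpha>1 < real K + 1" by linarith+
  hence "real K \<le> of_int i" using ai by linarith
  thus "int K \<le> i" by linarith
qed

lemma Aseq_pos: "0 \<le> Aseq C t0 \<gamma> n" using Aseq_ge[OF C0, of t0 \<gamma> n] C0 by linarith

lemma levels: "n \<le> K \<Longrightarrow> good (i - int n) (\<alpha>2 - real n) (Aseq C t0 \<gamma> n)"
proof (induction n)
  case 0
  then show ?case using good_base by simp
next
  case (Suc n)
  hence IH: "good (i - int n) (\<alpha>2 - real n) (Aseq C t0 \<gamma> n)" by simp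
  have "good (i - int n - 1) (\<alpha>2 - real n - 1) (stepc C t0 (\<alpha>2 - real n - \<alpha>2 - \<gamma>) (Aseq C t0 \<gamma> n))"
    using good_step[OF _ _ _ _ Aseq_pos IH] Suc.prems K_props by auto
  moreover have "\<alpha>2 - real n - \<alpha>2 - \<gamma> = - real n - \<gamma>" by simp
  ultimately have gg: "good (i - int n - 1) (\<alpha>2 - real n - 1) (Aseq C t0 \<gamma> (Suc n))"
    by (auto intro: good_mono)
  have eqs: "i - int (Suc n) = i - int n - 1" "\<alpha>2 - real (Suc n) = \<alpha>2 - real n - 1" by auto
  show ?case unfolding eqs by (rule gg)
qed

abbreviation "AK \<equiv> Aseq C t0 \<gamma> K"
abbreviation "AS \<equiv> Astar C t0 \<alpha>1 \<alpha>2 \<gamma>"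

lemma AS_ge: "AK \<le> AS" by (simp add: Astar_def K_def)
lemma AS_pos: "0 \<le> AS" using AS_ge Aseq_pos[of K] by linarith

lemma levels_all: "k \<le> K \<Longrightarrow> good (i - int k) (\<alpha>2 - real k) AS"
proof -
  assume kK: "k \<le> K"
  have "Aseq C t0 \<gamma> k \<le> AS" using Aseq_mono[OF kK] AS_ge by (rule order.trans)
  with levels[OF kK] show ?thesis by (rule good_mono)
qed

lemma lowlevel:
  assumes lt: "\<alpha>1 < \<alpha>2 - real K"
  shows "good (i - int K - 1) \<alpha>1 AS"
proof -
  have KP: "1 \<le> K" "real K \<le> \<alpha>2 - \<alpha>1" "\<alpha>2 - \<alpha>1 < real K + 1" "int K \<le> i" using K_props by auto
  have Ki: "int K < i" using lt ai by linarith
  have g1: "good (i - int K) (\<alpha>2 - real K) AK" using levels[of K] by simp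
  have g2': "good (i - int (K-1)) (\<alpha>2 - real (K-1)) AK"
    using levels[of "K-1"] Aseq_mono[of "K-1" K] by (auto intro: good_mono)
  have e1: "i - int (K-1) = i - int K + 1" "\<alpha>2 - real (K-1) = \<alpha>2 - real K + 1" using KP by auto
  have "good (i - int K) (\<alpha>2 - real (K-1)) (C*AK)"
    by (rule good_idx[OF g2']) (use KP a12 in auto)
  moreover have "\<alpha>2 - real (K-1) = \<alpha>2 - real K + 1" using e1(2) .
  ultimately have g2: "good (i - int K) (\<alpha>2 - real K + 1) (C*AK)" by metis
  have AKp: "0 \<le> AK" by (rule Aseq_pos)
  have g1': "good (i - int K) (\<alpha>2 - real K) ((C+1)*AK)"
    using g1 by (rule good_mono) (use AKp C0 in \<open>simp add: algebra_simps\<close>)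
  have g2'': "good (i - int K) (\<alpha>2 - real K + 1) ((C+1)*AK)"
    using g2 by (rule good_mono) (use AKp C0 in \<open>simp add: algebra_simps\<close>)
  have g3: "good (i - int K) (\<alpha>1 + 1) (C*((C+1)*AK))"
    using good_interp[OF _ _ _ _ _ _ _ _ g1' g2''] KP Ki AKp C0 by auto
  have g4: "good (i - int K - 1) (\<alpha>1 + 1 - 1) (stepc C t0 (\<alpha>1 + 1 - \<alpha>2 - \<gamma>) (C*((C+1)*AK)))"
    using good_step[OF _ _ _ _ _ g3] KP Ki AKp C0 a12 by auto
  show ?thesis using g4 by (auto simp: Astar_def K_def intro: good_mono)
qed

lemma final:
  assumes j: "0 \<le> j" "j \<le> i" and a: "max \<alpha>1 (\<alpha>2 - of_int j) \<le> a" "a \<le> \<alpha>2" and t: "t0 \<le> t"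
  shows "F (i - j) a t \<le> ((C+1)^3 * AS) * t powr (a - \<alpha>2 - \<gamma>) * (F i \<alpha>2 t0 + D)"
proof -
  have KP: "1 \<le> K" "real K \<le> \<alpha>2 - \<alpha>1" "\<alpha>2 - \<alpha>1 < real K + 1" "int K \<le> i" using K_props by auto
  define k where "k = nat \<lfloor>\<alpha>2 - a\<rfloor>"
  have fl0: "0 \<le> \<lfloor>\<alpha>2 - a\<rfloor>" using a by simp
  have kr: "real k = of_int \<lfloor>\<alpha>2 - a\<rfloor>" using fl0 by (simp add: k_def)
  have k1: "real k \<le> \<alpha>2 - a" "\<alpha>2 - a < real k + 1" using kr by linarith+
  have kK: "k \<le> K"
  proof -
    have "\<lfloor>\<alpha>2 - a\<rfloor> \<le> \<lfloor>\<alpha>2 - \<alpha>1\<rfloor>" using a by (intro floor_mono) simp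
    thus ?thesis by (simp add: k_def K_def)
  qed
  have kj: "int k \<le> j"
  proof -
    have "\<lfloor>\<alpha>2 - a\<rfloor> \<le> j" using a by (simp add: floor_le_iff)
    thus ?thesis using fl0 by (simp add: k_def)
  qed
  have ASp: "0 \<le> AS" by (rule AS_pos)
  have G: "good (i - j) a ((C+1)^3 * AS)"
  proof (cases "a = \<alpha>2 - real k")
    case True
    have gk: "good (i - int k) a AS" using levels_all[OF kK] True by simp
    have "good (i - j) a (C * AS)" using j kj KP kK a by (intro good_idx[OF gk, of "i-j"]) auto
    thus ?thesis using cb2[OF C0 ASp] by (rule good_mono)
  next
    case False
    hence k2: "\<alpha>2 - real k - 1 < a" "a < \<alpha>2 - real k" using k1 by auto
    have jk: "int k + 1 \<le> j"
    proof -
      have "real_of_int (int k) < of_int j" using k2 a by simp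
      thus ?thesis by linarith
    qed
    define b1 where "b1 = (if k + 1 \<le> K then \<alpha>2 - real k - 1 else \<alpha>1)"
    have gb1: "good (i - int k - 1) b1 AS"
    proof (cases "k + 1 \<le> K")
      case True
      then show ?thesis using levels_all[OF True] by (simp add: b1_def algebra_simps)
    next
      case False
      hence "k = K" using kK by simp
      moreover have "\<alpha>1 < \<alpha>2 - real K" using k2 a \<open>k = K\<close> by simp
      ultimately show ?thesis using lowlevel False by (simp add: b1_def)
    qed
    have b1r: "\<alpha>1 \<le> b1" "b1 \<le> a" "b1 < \<alpha>2 - real k"
      using k2 a KP by (auto simp: b1_def)
    have gb2: "good (i - int k - 1) (\<alpha>2 - real k) (C * AS)"
      using good_idx[OF levels_all[OF kK]] kK KP b1r a by auto
    have gb1': "good (i - int k - 1) b1 ((C+1)*AS)"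
      using gb1 by (rule good_mono) (use ASp C0 in \<open>simp add: algebra_simps\<close>)
    have gb2': "good (i - int k - 1) (\<alpha>2 - real k) ((C+1)*AS)"
      using gb2 by (rule good_mono) (use ASp C0 in \<open>simp add: algebra_simps\<close>)
    have gi: "good (i - int k - 1) a (C*((C+1)*AS))"
      using good_interp[OF _ _ _ _ _ _ _ _ gb1' gb2'] b1r k2 kK KP ASp C0 a by auto
    have "good (i - j) a (C*(C*((C+1)*AS)))"
      using jk j kK KP b1r a by (intro good_idx[OF gi, of "i-j"]) auto
    thus ?thesis using cb1[OF C0 ASp] by (rule good_mono)
  qed
  thus ?thesis using t unfolding good_def by blast
qed

end

lemma eps_lim:
  fixes x c y :: real
  assumes c: "0 \<le> c" and H: "\<And>\<epsilon>. \<epsilon> > 0 \<Longrightarrow> x \<le> c * (y + \<epsilon>)"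
  shows "x \<le> c * y"
proof (cases "c = 0")
  case True
  then show ?thesis using H[of 1] by simp
next
  case False
  hence cp: "c > 0" using c by simp
  show ?thesis
  proof (rule field_le_epsilon)
    fix e :: real assume e: "0 < e"
    have "x \<le> c * (y + e / c)" using H[of "e/c"] e cp by simp
    also have "\<dots> = c * y + e" using cp by (simp add: algebra_simps)
    finally show "x \<le> c * y + e" .
  qed
qed

lemma Astar_pos: "0 < C \<Longrightarrow> 0 \<le> Astar C t0 \<alpha>1 \<alpha>2 \<gamma>"
  using Aseq_ge[of C t0 \<gamma> "nat \<lfloor>\<alpha>2 - \<alpha>1\<rfloor>"] unfolding Astar_def by linarith

theorem lemma5p2:
  fixes t0 \<alpha>1 \<alpha>2 \<gamma> C :: real and i :: int
  assumes "t0 > 0" and "\<alpha>1 \<le> \<alpha>2 - 1" and "i \<ge> 1" and "\<alpha>2 - \<alpha>1 \<le> of_int i"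
      and "\<gamma> \<ge> 0" and "C > 0"
  shows "\<exists>C'. \<forall>(D::real) (F :: int \<Rightarrow> real \<Rightarrow> real \<Rightarrow> real).
    ( D \<ge> 0
    \<and> (\<forall>j \<in> {-1..i}. \<forall>\<alpha> \<in> {\<alpha>1 - 1..\<alpha>2}. \<forall>t \<ge> t0. F j \<alpha> t \<ge> 0)
    \<and> (\<forall>j \<in> {-1..i}. \<forall>\<alpha> \<in> {\<alpha>1 - 1..\<alpha>2}.
          set_borel_measurable lebesgue {t0..} (F j \<alpha>))
    \<and> (\<forall>j1 \<in> {-1..i}. \<forall>j2 \<in> {-1..i}. \<forall>\<beta> \<in> {\<alpha>1..\<alpha>2}. \<forall>t \<ge> t0.
          j1 \<le> j2 \<longrightarrow> F j1 \<beta> t \<le> C * F j2 \<beta> t)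
    \<and> (\<forall>j \<in> {-1..i}. \<forall>\<beta>1 \<in> {\<alpha>1..\<alpha>2}. \<forall>\<beta>2 \<in> {\<alpha>1..\<alpha>2}. \<forall>t \<ge> t0.
          \<beta>1 \<le> \<beta>2 \<longrightarrow> F j \<beta>1 t \<le> C * F j \<beta>2 t)
    \<and> (\<forall>j \<in> {-1..i}. \<forall>\<alpha> \<in> {\<alpha>1..\<alpha>2}. \<forall>\<beta>1 \<in> {\<alpha>1..\<alpha>2}. \<forall>\<beta>2 \<in> {\<alpha>1..\<alpha>2}. \<forall>t \<ge> t0.
          \<beta>1 \<le> \<alpha> \<and> \<alpha> \<le> \<beta>2 \<and> \<beta>1 < \<beta>2 \<longrightarrow>
          F j \<alpha> t \<le> C * (F j \<beta>1 t powr ((\<beta>2 - \<alpha>) / (\<beta>2 - \<beta>1)))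
                        * (F j \<beta>2 t powr ((\<alpha> - \<beta>1) / (\<beta>2 - \<beta>1))))
    \<and> (\<forall>j \<in> {0..i}. \<forall>\<alpha> \<in> {\<alpha>1..\<alpha>2}. \<forall>t1 t2. t0 \<le> t1 \<and> t1 \<le> t2 \<longrightarrow>
          ennreal (F j \<alpha> t2) + (\<integral>\<^sup>+ t\<in>{t1..t2}. ennreal (F (j - 1) (\<alpha> - 1) t) \<partial>lebesgue)
            \<le> ennreal (C * (F j \<alpha> t1 + D * t1 powr (\<alpha> - \<alpha>2 - \<gamma>))))
    \<and> (\<gamma> > 0 \<longrightarrow> (\<forall>t \<ge> t0. F i \<alpha>2 t \<le> C * t powr (- \<gamma>) * (F i \<alpha>2 t0 + D))) )
    \<longrightarrow> (\<forall>j \<in> {0..i}. \<forall>\<alpha> \<in> {max \<alpha>1 (\<alpha>2 - of_int j)..\<alpha>2}. \<forall>t \<ge> t0.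
          F (i - j) \<alpha> t \<le> C' * t powr (\<alpha> - \<alpha>2 - \<gamma>) * (F i \<alpha>2 t0 + D))"
  proof (rule exI[of _ "(C+1)^3 * Astar C t0 \<alpha>1 \<alpha>2 \<gamma>"], intro allI impI)
  fix D :: real and F :: "int \<Rightarrow> real \<Rightarrow> real \<Rightarrow> real"
  assume H: "D \<ge> 0
    \<and> (\<forall>j \<in> {-1..i}. \<forall>\<alpha> \<in> {\<alpha>1 - 1..\<alpha>2}. \<forall>t \<ge> t0. F j \<alpha> t \<ge> 0)
    \<and> (\<forall>j \<in> {-1..i}. \<forall>\<alpha> \<in> {\<alpha>1 - 1..\<alpha>2}.
          set_borel_measurable lebesgue {t0..} (F j \<alpha>))
    \<and> (\<forall>j1 \<in> {-1..i}. \<forall>j2 \<in> {-1..i}. \<forall>\<beta> \<in> {\<alpha>1..\<alpha>2}. \<forall>t \<ge> t0.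
          j1 \<le> j2 \<longrightarrow> F j1 \<beta> t \<le> C * F j2 \<beta> t)
    \<and> (\<forall>j \<in> {-1..i}. \<forall>\<beta>1 \<in> {\<alpha>1..\<alpha>2}. \<forall>\<beta>2 \<in> {\<alpha>1..\<alpha>2}. \<forall>t \<ge> t0.
          \<beta>1 \<le> \<beta>2 \<longrightarrow> F j \<beta>1 t \<le> C * F j \<beta>2 t)
    \<and> (\<forall>j \<in> {-1..i}. \<forall>\<alpha> \<in> {\<alpha>1..\<alpha>2}. \<forall>\<beta>1 \<in> {\<alpha>1..\<alpha>2}. \<forall>\<beta>2 \<in> {\<alpha>1..\<alpha>2}. \<forall>t \<ge> t0.
          \<beta>1 \<le> \<alpha> \<and> \<alpha> \<le> \<beta>2 \<and> \<beta>1 < \<beta>2 \<longrightarrow>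
          F j \<alpha> t \<le> C * (F j \<beta>1 t powr ((\<beta>2 - \<alpha>) / (\<beta>2 - \<beta>1)))
                        * (F j \<beta>2 t powr ((\<alpha> - \<beta>1) / (\<beta>2 - \<beta>1))))
    \<and> (\<forall>j \<in> {0..i}. \<forall>\<alpha> \<in> {\<alpha>1..\<alpha>2}. \<forall>t1 t2. t0 \<le> t1 \<and> t1 \<le> t2 \<longrightarrow>
          ennreal (F j \<alpha> t2) + (\<integral>\<^sup>+ t\<in>{t1..t2}. ennreal (F (j - 1) (\<alpha> - 1) t) \<partial>lebesgue)
            \<le> ennreal (C * (F j \<alpha> t1 + D * t1 powr (\<alpha> - \<alpha>2 - \<gamma>))))
    \<and> (\<gamma> > 0 \<longrightarrow> (\<forall>t \<ge> t0. F i \<alpha>2 t \<le> C * t powr (- \<gamma>) * (F i \<alpha>2 t0 + D)))"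
  then have D0: "D \<ge> 0"
    and nonneg: "\<forall>j \<in> {-1..i}. \<forall>\<alpha> \<in> {\<alpha>1 - 1..\<alpha>2}. \<forall>t \<ge> t0. F j \<alpha> t \<ge> 0"
    and mj: "\<forall>j1 \<in> {-1..i}. \<forall>j2 \<in> {-1..i}. \<forall>\<beta> \<in> {\<alpha>1..\<alpha>2}. \<forall>t \<ge> t0.
          j1 \<le> j2 \<longrightarrow> F j1 \<beta> t \<le> C * F j2 \<beta> t"
    and mb: "\<forall>j \<in> {-1..i}. \<forall>\<beta>1 \<in> {\<alpha>1..\<alpha>2}. \<forall>\<beta>2 \<in> {\<alpha>1..\<alpha>2}. \<forall>t \<ge> t0.
          \<beta>1 \<le> \<beta>2 \<longrightarrow> F j \<beta>1 t \<le> C * F j \<beta>2 t"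
    and ip: "\<forall>j \<in> {-1..i}. \<forall>\<alpha> \<in> {\<alpha>1..\<alpha>2}. \<forall>\<beta>1 \<in> {\<alpha>1..\<alpha>2}. \<forall>\<beta>2 \<in> {\<alpha>1..\<alpha>2}. \<forall>t \<ge> t0.
          \<beta>1 \<le> \<alpha> \<and> \<alpha> \<le> \<beta>2 \<and> \<beta>1 < \<beta>2 \<longrightarrow>
          F j \<alpha> t \<le> C * (F j \<beta>1 t powr ((\<beta>2 - \<alpha>) / (\<beta>2 - \<beta>1)))
                        * (F j \<beta>2 t powr ((\<alpha> - \<beta>1) / (\<beta>2 - \<beta>1)))"
    and en: "\<forall>j \<in> {0..i}. \<forall>\<alpha> \<in> {\<alpha>1..\<alpha>2}. \<forall>t1 t2. t0 \<le> t1 \<and> t1 \<le> t2 \<longrightarrow>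
          ennreal (F j \<alpha> t2) + (\<integral>\<^sup>+ t\<in>{t1..t2}. ennreal (F (j - 1) (\<alpha> - 1) t) \<partial>lebesgue)
            \<le> ennreal (C * (F j \<alpha> t1 + D * t1 powr (\<alpha> - \<alpha>2 - \<gamma>)))"
    and dc: "\<gamma> > 0 \<longrightarrow> (\<forall>t \<ge> t0. F i \<alpha>2 t \<le> C * t powr (- \<gamma>) * (F i \<alpha>2 t0 + D))"
    using conjunct1[OF H] conjunct1[OF conjunct2[OF H]]
      conjunct1[OF conjunct2[OF conjunct2[OF conjunct2[OF H]]]]
      conjunct1[OF conjunct2[OF conjunct2[OF conjunct2[OF conjunct2[OF H]]]]]
      conjunct1[OF conjunct2[OF conjunct2[OF conjunct2[OF conjunct2[OF conjunct2[OF H]]]]]]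
      conjunct1[OF conjunct2[OF conjunct2[OF conjunct2[OF conjunct2[OF conjunct2[OF conjunct2[OF H]]]]]]]
      conjunct2[OF conjunct2[OF conjunct2[OF conjunct2[OF conjunct2[OF conjunct2[OF conjunct2[OF H]]]]]]]
    by - (assumption)+
  show "\<forall>j \<in> {0..i}. \<forall>\<alpha> \<in> {max \<alpha>1 (\<alpha>2 - of_int j)..\<alpha>2}. \<forall>t \<ge> t0.
          F (i - j) \<alpha> t \<le> (C+1)^3 * Astar C t0 \<alpha>1 \<alpha>2 \<gamma> * t powr (\<alpha> - \<alpha>2 - \<gamma>) * (F i \<alpha>2 t0 + D)"
  proof (intro ballI allI impI)
    fix j a t assume j: "j \<in> {0..i}" and a: "a \<in> {max \<alpha>1 (\<alpha>2 - of_int j)..\<alpha>2}" and t: "t0 \<le> t"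
    have c0: "0 \<le> (C+1)^3 * Astar C t0 \<alpha>1 \<alpha>2 \<gamma> * t powr (a - \<alpha>2 - \<gamma>)"
      using Astar_pos[OF assms(6)] assms(6) by simp
    show "F (i - j) a t \<le> (C+1)^3 * Astar C t0 \<alpha>1 \<alpha>2 \<gamma> * t powr (a - \<alpha>2 - \<gamma>) * (F i \<alpha>2 t0 + D)"
    proof (rule eps_lim[OF c0])
      fix \<epsilon> :: real assume \<epsilon>: "\<epsilon> > 0"
      interpret Le: L t0 \<alpha>1 \<alpha>2 \<gamma> C i "D + \<epsilon>" F
      proof (unfold_locales)
        show "0 < D + \<epsilon>" using D0 \<epsilon> by simp
        show "\<forall>j\<in>{0..i}. \<forall>\<alpha>\<in>{\<alpha>1..\<alpha>2}. \<forall>t1 t2. t0 \<le> t1 \<and> t1 \<le> t2 \<longrightarrow>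
          ennreal (F j \<alpha> t2) + (\<integral>\<^sup>+ t\<in>{t1..t2}. ennreal (F (j - 1) (\<alpha> - 1) t) \<partial>lebesgue)
            \<le> ennreal (C * (F j \<alpha> t1 + (D + \<epsilon>) * t1 powr (\<alpha> - \<alpha>2 - \<gamma>)))"
        proof (intro ballI allI impI)
          fix j \<alpha> t1 t2 assume jj: "j \<in> {0..i}" and aa: "\<alpha> \<in> {\<alpha>1..\<alpha>2}" and tt: "t0 \<le> t1 \<and> t1 \<le> t2"
          have "C * (F j \<alpha> t1 + D * t1 powr (\<alpha> - \<alpha>2 - \<gamma>)) \<le> C * (F j \<alpha> t1 + (D + \<epsilon>) * t1 powr (\<alpha> - \<alpha>2 - \<gamma>))"
            using assms(6) \<epsilon> by (intro mult_left_mono add_left_mono mult_right_mono) auto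
          hence "ennreal (C * (F j \<alpha> t1 + D * t1 powr (\<alpha> - \<alpha>2 - \<gamma>))) \<le> ennreal (C * (F j \<alpha> t1 + (D + \<epsilon>) * t1 powr (\<alpha> - \<alpha>2 - \<gamma>)))"
            by (rule ennreal_leI)
          with en jj aa tt show "ennreal (F j \<alpha> t2) + (\<integral>\<^sup>+ t\<in>{t1..t2}. ennreal (F (j - 1) (\<alpha> - 1) t) \<partial>lebesgue)
            \<le> ennreal (C * (F j \<alpha> t1 + (D + \<epsilon>) * t1 powr (\<alpha> - \<alpha>2 - \<gamma>)))"
            by (meson order.trans)
        qed
        show "0 < \<gamma> \<longrightarrow> (\<forall>t\<ge>t0. F i \<alpha>2 t \<le> C * t powr - \<gamma> * (F i \<alpha>2 t0 + (D + \<epsilon>)))"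
        proof (intro impI allI)
          fix t assume g: "0 < \<gamma>" and t: "t0 \<le> t"
          have "F i \<alpha>2 t \<le> C * t powr - \<gamma> * (F i \<alpha>2 t0 + D)" using dc g t by blast
          also have "\<dots> \<le> C * t powr - \<gamma> * (F i \<alpha>2 t0 + (D + \<epsilon>))"
            using assms(6) \<epsilon> by (intro mult_left_mono) auto
          finally show "F i \<alpha>2 t \<le> C * t powr - \<gamma> * (F i \<alpha>2 t0 + (D + \<epsilon>))" .
        qed
      qed (rule assms(1-6) nonneg mj mb ip)+
      have "F (i - j) a t \<le> ((C+1)^3 * Astar C t0 \<alpha>1 \<alpha>2 \<gamma>) * t powr (a - \<alpha>2 - \<gamma>) * (F i \<alpha>2 t0 + (D + \<epsilon>))"
        using Le.final[of j a t] j a t by auto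
      thus "F (i - j) a t \<le> (C+1)^3 * Astar C t0 \<alpha>1 \<alpha>2 \<gamma> * t powr (a - \<alpha>2 - \<gamma>) * (F i \<alpha>2 t0 + D + \<epsilon>)"
        by (simp add: add.assoc)
    qed
  qed
qed

end
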